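(* If a topological dynamical system $(X,T)$ is an almost one-to-one extension of a minimal equicontinuous system $(Y,S)$ (i.e. there is an almost one-to-one factor map $\pi:(X,T)\to(Y,S)$), then $(X,T)$ is syndetically equicontinuous, i.e. $\mathrm{Eq}_{\mathrm{syn}}(X,T)=X$.
   Context: Systems: compact metric $(X,\varrho)$ with continuous surjection $T$. Factor map: continuous surjection $\pi$ with $\pi\circ T=S\circ\pi$; almost one-to-one: $\{y:\pi^{-1}(y)\text{ is a singleton}\}$ is dense in $Y$. Equicontinuous: the family $\{S^n\}_{n\ge0}$ is equicontinuous. $S_T(U,\delta)=\{n\in\mathbb{N}:\exists x_1,x_2\in U,\ \varrho(T^nx_1,T^nx_2)>\delta\}$, $J_T(U,\delta)=\mathbb N\setminus S_T(U,\delta)$. $x\in\mathrm{Eq}_{\mathrm{syn}}(X,T)$ iff for every $\varepsilon>0$ some neighborhood $U$ of $x$ has $J_T(U,\varepsilon)$ syndetic (bounded gaps). *)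

theory Defs
  imports "HOL-Analysis.Analysis"
begin

definition tds :: "'a::metric_space set \<Rightarrow> ('a \<Rightarrow> 'a) \<Rightarrow> bool" where
  "tds X T \<longleftrightarrow> compact X \<and> continuous_on X T \<and> T ` X = X"

definition factor_map :: "'a::metric_space set \<Rightarrow> ('a \<Rightarrow> 'a) \<Rightarrow> 'b::metric_space set
    \<Rightarrow> ('b \<Rightarrow> 'b) \<Rightarrow> ('a \<Rightarrow> 'b) \<Rightarrow> bool" where
  "factor_map X T Y S \<pi> \<longleftrightarrow> continuous_on X \<pi> \<and> \<pi> ` X = Y \<and> (\<forall>x\<in>X. \<pi> (T x) = S (\<pi> x))"

definition almost_one_to_one :: "'a set \<Rightarrow> 'b::topological_space set \<Rightarrow> ('a \<Rightarrow> 'b) \<Rightarrow> bool" where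
  "almost_one_to_one X Y \<pi> \<longleftrightarrow> Y \<subseteq> closure {y \<in> Y. \<exists>!x. x \<in> X \<and> \<pi> x = y}"

definition minimal_sys :: "'b::metric_space set \<Rightarrow> ('b \<Rightarrow> 'b) \<Rightarrow> bool" where
  "minimal_sys Y S \<longleftrightarrow> (\<forall>Z. Z \<subseteq> Y \<and> closed Z \<and> Z \<noteq> {} \<and> S ` Z \<subseteq> Z \<longrightarrow> Z = Y)"

definition equicontinuous_sys :: "'b::metric_space set \<Rightarrow> ('b \<Rightarrow> 'b) \<Rightarrow> bool" where
  "equicontinuous_sys Y S \<longleftrightarrow>
     (\<forall>y\<in>Y. \<forall>e>0. \<exists>d>0. \<forall>y'\<in>Y. dist y y' < d \<longrightarrow> (\<forall>n. dist ((S^^n) y) ((S^^n) y') < e))"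

definition S_set :: "('a \<Rightarrow> 'a) \<Rightarrow> 'a::metric_space set \<Rightarrow> real \<Rightarrow> nat set" where
  "S_set T U \<delta> = {n. \<exists>x1\<in>U. \<exists>x2\<in>U. dist ((T^^n) x1) ((T^^n) x2) > \<delta>}"

definition J_set :: "('a \<Rightarrow> 'a) \<Rightarrow> 'a::metric_space set \<Rightarrow> real \<Rightarrow> nat set" where
  "J_set T U \<delta> = UNIV - S_set T U \<delta>"

definition syndetic :: "nat set \<Rightarrow> bool" where
  "syndetic A \<longleftrightarrow> (\<exists>L>0. \<forall>m. \<exists>n\<in>A. m \<le> n \<and> n < m + L)"

definition Eq_syn :: "'a::metric_space set \<Rightarrow> ('a \<Rightarrow> 'a) \<Rightarrow> 'a set" where
  "Eq_syn X T = {x \<in> X. \<forall>e>0. \<exists>U. openin (top_of_set X) U \<and> x \<in> U \<and> syndetic (J_set T U e)}"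

end

theory Submission
  imports Defs
begin

lemma iter_in:
  assumes "S ` Y \<subseteq> Y" "y \<in> Y" shows "(S^^n) y \<in> Y"
  using assms by (induction n) auto

lemma iter_cont:
  assumes "continuous_on Y S" "S ` Y \<subseteq> Y" shows "continuous_on Y (S^^n)"
proof (induction n)
  case 0 then show ?case by (simp add: continuous_on_id)
next
  case (Suc n)
  have "(S^^n) ` Y \<subseteq> Y" using iter_in[OF assms(2)] by auto
  then have "continuous_on ((S^^n) ` Y) S" using assms(1) continuous_on_subset by blast
  then show ?case using Suc continuous_on_compose by (metis funpow.simps(2))
qed

lemma iter_comm:
  assumes "T ` X \<subseteq> X" "\<forall>x\<in>X. \<pi> (T x) = S (\<pi> x)" "x \<in> X"
  shows "\<pi> ((T^^n) x) = (S^^n) (\<pi> x)"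
proof (induction n)
  case 0 then show ?case by simp
next
  case (Suc n)
  have "(T^^n) x \<in> X" using iter_in[OF assms(1) assms(3)] .
  then show ?case using Suc assms(2) by simp
qed

lemma syndetic_mono: "syndetic A \<Longrightarrow> A \<subseteq> B \<Longrightarrow> syndetic B"
  unfolding syndetic_def by blast


lemma return_syndetic:
  fixes Y :: "'b::metric_space set"
  assumes "tds Y S" "minimal_sys Y S" "y0 \<in> Y" "r > 0" "y \<in> Y"
  shows "syndetic {n. dist ((S^^n) y) y0 < r}"
proof -
  have cY: "compact Y" and cS: "continuous_on Y S" and SY: "S ` Y = Y"
    using assms(1) unfolding tds_def by auto
  have SY': "S ` Y \<subseteq> Y" using SY by simp
  have "\<forall>k. \<exists>A. open A \<and> A \<inter> Y = (S^^k) -` ball y0 r \<inter> Y"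
  proof
    fix k
    have "continuous_on Y (S^^k)" using iter_cont[OF cS SY'] .
    then show "\<exists>A. open A \<and> A \<inter> Y = (S^^k) -` ball y0 r \<inter> Y"
      unfolding continuous_on_open_invariant using open_ball by blast
  qed
  from choice[OF this] obtain W where W0: "\<forall>k. open (W k) \<and> W k \<inter> Y = (S^^k) -` ball y0 r \<inter> Y"
    by blast
  then have W: "\<And>k. open (W k)" "\<And>k. W k \<inter> Y = (S^^k) -` ball y0 r \<inter> Y" by auto
  define Z where "Z = Y \<inter> - (\<Union>k. W k)"
  have "open (\<Union>k. W k)" by (rule open_UN) (simp add: W(1))
  then have "closed (- (\<Union>k. W k))" by (rule closed_Compl)
  moreover have "closed Y" using cY compact_imp_closed by blast
  ultimately have clZ: "closed Z" unfolding Z_def by (rule closed_Int[rotated])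
  have SZ: "S ` Z \<subseteq> Z"
  proof
    fix w assume "w \<in> S ` Z"
    then obtain z where z: "z \<in> Z" "w = S z" by auto
    have zY: "z \<in> Y" using z Z_def by auto
    have wY: "w \<in> Y" using z zY SY' by auto
    have "w \<notin> W k" for k
    proof
      assume "w \<in> W k"
      then have "(S^^k) w \<in> ball y0 r" using W(2)[of k] wY by auto
      then have "(S^^(Suc k)) z \<in> ball y0 r" using z by (simp add: funpow_Suc_right del: funpow.simps)
      then have "z \<in> W (Suc k)" using W(2)[of "Suc k"] zY by auto
      then show False using z Z_def by auto
    qed
    then show "w \<in> Z" using wY Z_def by auto
  qed
  have ZY: "Z \<noteq> Y"
  proof
    assume "Z = Y"
    have "y0 \<in> (S^^0) -` ball y0 r \<inter> Y" using assms(3,4) by simp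
    then have "y0 \<in> W 0" using W(2)[of 0] by blast
    then show False using `Z = Y` assms(3) Z_def by auto
  qed
  have "Z \<subseteq> Y" unfolding Z_def by auto
  have "Z = {}"
  proof (rule ccontr)
    assume "Z \<noteq> {}"
    then have "Z = Y" using assms(2)[unfolded minimal_sys_def, rule_format, of Z] \<open>Z \<subseteq> Y\<close> clZ SZ by blast
    then show False using ZY by blast
  qed
  then have "Y \<subseteq> (\<Union>k\<in>UNIV. W k)" unfolding Z_def by auto
  then obtain C where C: "C \<subseteq> UNIV" "finite C" "Y \<subseteq> (\<Union>k\<in>C. W k)"
    by (rule compactE_image[OF cY W(1)])
  then obtain N where N: "C \<subseteq> {..<N}" using finite_nat_iff_bounded by blast
  show ?thesis unfolding syndetic_def
  proof (intro exI[of _ "Suc N"] conjI allI)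
    show "0 < Suc N" by simp
    fix m
    have mY: "(S^^m) y \<in> Y" using iter_in[OF SY' assms(5)] .
    then obtain k where k: "k \<in> C" "(S^^m) y \<in> W k" using C(3) by blast
    then have "(S^^m) y \<in> (S^^k) -` ball y0 r \<inter> Y" using W(2)[of k] mY by blast
    then have "(S^^k) ((S^^m) y) \<in> ball y0 r" by simp
    then have "dist y0 ((S^^(k+m)) y) < r" by (simp add: funpow_add)
    then have d: "dist ((S^^(m+k)) y) y0 < r" by (simp add: dist_commute add.commute)
    have "k < N" using k N by blast
    then show "\<exists>n\<in>{n. dist ((S^^n) y) y0 < r}. m \<le> n \<and> n < m + Suc N"
      using d by (intro bexI[of _ "m+k"]) simp_all
  qed
qed
lemma fiber_nbhd:
  fixes X :: "'a::metric_space set" and \<pi> :: "'a \<Rightarrow> 'b::metric_space"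
  assumes "compact X" "continuous_on X \<pi>" "x0 \<in> X" "\<forall>x\<in>X. \<pi> x = \<pi> x0 \<longrightarrow> x = x0" "e > 0"
  shows "\<exists>\<delta>>0. \<forall>x\<in>X. dist (\<pi> x) (\<pi> x0) < \<delta> \<longrightarrow> dist x x0 < e"
proof -
  define K where "K = X \<inter> - ball x0 e"
  have "compact K" unfolding K_def using assms(1) by (intro compact_Int_closed) auto
  then have "compact (\<pi> ` K)"
    using assms(2) by (intro compact_continuous_image) (auto intro: continuous_on_subset simp: K_def)
  then have "open (- (\<pi> ` K))" using compact_imp_closed by blast
  moreover have "\<pi> x0 \<notin> \<pi> ` K" using assms(4,5) K_def by auto
  ultimately obtain \<delta> where d: "\<delta> > 0" "ball (\<pi> x0) \<delta> \<subseteq> - (\<pi> ` K)"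
    using open_contains_ball by blast
  show ?thesis
  proof (intro exI[of _ \<delta>] conjI ballI impI)
    fix x assume "x \<in> X" "dist (\<pi> x) (\<pi> x0) < \<delta>"
    then have "\<pi> x \<in> ball (\<pi> x0) \<delta>" by (simp add: dist_commute)
    then have "\<pi> x \<notin> \<pi> ` K" using d(2) by blast
    then have "x \<notin> K" by auto
    then show "dist x x0 < e" using `x \<in> X` K_def by (auto simp: dist_commute)
  qed (use d in auto)
qed

theorem proposition4p2:
  fixes X :: "'a::metric_space set" and T :: "'a \<Rightarrow> 'a"
    and Y :: "'b::metric_space set" and S :: "'b \<Rightarrow> 'b" and \<pi> :: "'a \<Rightarrow> 'b"
  assumes "tds X T" and "tds Y S"
    and "minimal_sys Y S" and "equicontinuous_sys Y S"
    and "factor_map X T Y S \<pi>" and "almost_one_to_one X Y \<pi>"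
  shows "Eq_syn X T = X"
proof
  show "Eq_syn X T \<subseteq> X" unfolding Eq_syn_def by auto
  show "X \<subseteq> Eq_syn X T"
  proof
    fix x assume xX: "x \<in> X"
    have cX: "compact X" and TX: "T ` X \<subseteq> X" using assms(1) unfolding tds_def by auto
    have cp: "continuous_on X \<pi>" and pXY: "\<pi> ` X = Y" and comm: "\<forall>x\<in>X. \<pi> (T x) = S (\<pi> x)"
      using assms(5) unfolding factor_map_def by auto
    have "\<pi> x \<in> Y" using xX pXY by auto
    then have "{y \<in> Y. \<exists>!x. x \<in> X \<and> \<pi> x = y} \<noteq> {}"
      using assms(6) unfolding almost_one_to_one_def by (metis closure_empty empty_iff subsetD)
    then obtain x0 where x0: "x0 \<in> X" "\<forall>x\<in>X. \<pi> x = \<pi> x0 \<longrightarrow> x = x0" by blast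
    have y0Y: "\<pi> x0 \<in> Y" using x0 pXY by auto
    have "\<forall>e>0. \<exists>U. openin (top_of_set X) U \<and> x \<in> U \<and> syndetic (J_set T U e)"
    proof (intro allI impI)
      fix e :: real assume e: "e > 0"
      obtain \<delta> where d: "\<delta> > 0" "\<forall>z\<in>X. dist (\<pi> z) (\<pi> x0) < \<delta> \<longrightarrow> dist z x0 < e/2"
        using fiber_nbhd[OF cX cp x0(1) x0(2), of "e/2"] e by auto
      obtain d' where d': "d' > 0" "\<forall>y'\<in>Y. dist (\<pi> x) y' < d' \<longrightarrow> (\<forall>n. dist ((S^^n) (\<pi> x)) ((S^^n) y') < \<delta>/2)"
        using assms(4) `\<pi> x \<in> Y` d(1) unfolding equicontinuous_sys_def
        by (meson half_gt_zero)
      define U where "U = X \<inter> \<pi> -` ball (\<pi> x) d'"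
      have "openin (top_of_set X) U" unfolding U_def
        using cp continuous_openin_preimage_gen open_ball by blast
      moreover have "x \<in> U" unfolding U_def using xX d' by auto
      moreover have "syndetic (J_set T U e)"
      proof (rule syndetic_mono[OF return_syndetic[OF assms(2,3) y0Y _ `\<pi> x \<in> Y`, of "\<delta>/2"]])
        show "0 < \<delta>/2" using d by simp
        show "{n. dist ((S ^^ n) (\<pi> x)) (\<pi> x0) < \<delta> / 2} \<subseteq> J_set T U e"
        proof
          fix n assume n: "n \<in> {n. dist ((S ^^ n) (\<pi> x)) (\<pi> x0) < \<delta> / 2}"
          have close: "dist ((T^^n) z) x0 < e/2" if "z \<in> U" for z
          proof -
            have zX: "z \<in> X" and "dist (\<pi> x) (\<pi> z) < d'" using that U_def by (auto simp: dist_commute)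
            then have "dist ((S^^n) (\<pi> x)) ((S^^n) (\<pi> z)) < \<delta>/2" using d' pXY by auto
            then have "dist (\<pi> ((T^^n) z)) (\<pi> x0) < \<delta>"
              using n iter_comm[OF TX comm zX, of n] dist_triangle3[of "(S^^n) (\<pi> z)" "\<pi> x0" "(S^^n) (\<pi> x)"]
              by auto
            moreover have "(T^^n) z \<in> X" using iter_in[OF TX zX] .
            ultimately show ?thesis using d(2) by auto
          qed
          have "\<not> dist ((T^^n) x1) ((T^^n) x2) > e" if "x1 \<in> U" "x2 \<in> U" for x1 x2
            using close[OF that(1)] close[OF that(2)] dist_triangle3[of "(T^^n) x1" "(T^^n) x2" x0] by (auto simp: dist_commute)
          then show "n \<in> J_set T U e" unfolding J_set_def S_set_def by auto
        qed
      qed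
      ultimately show "\<exists>U. openin (top_of_set X) U \<and> x \<in> U \<and> syndetic (J_set T U e)" by blast
    qed
    then show "x \<in> Eq_syn X T" unfolding Eq_syn_def using xX by auto
  qed
qed

end
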